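(* Let $0<\delta<1/100$, $\beta\in\mathbb R$, $1<q<\infty$, and let $f\in\mathbb M^2\cap\mathbb W_q^{\beta,\beta}$ be such that its restrictions to $[-1,-1+100\delta^2]$ and to $[1-100\delta^2,1]$ are linear polynomials. Then \[ \Omega_\varphi^2(f,\delta)_{\varphi^{2\beta},q}\le c\,\delta^{1/q-1}\,\Omega_\varphi^2(f,\delta)_{\varphi^{2\beta-1+1/q},1}, \] with $c$ independent of $f$ and $\delta$.
   Context: For $x\in[-1,1]$, $\varphi(x)=\sqrt{1-x^2}$ and $w_{\beta,\beta}=\varphi^{2\beta}$; $\mathbb W_q^{\beta,\beta}=\{f:\|\varphi^{2\beta}f\|_{L_q[-1,1]}<\infty\}$. $\Delta_h^2(f,x)=f(x-h)-2f(x)+f(x+h)$ if $x\pm h\in[-1,1]$, else $0$. For a weight $w$, $\Omega_\varphi^2(f,\delta)_{w,q}=\sup_{0<h\le\delta}\|w(x)\Delta^2_{h\varphi(x)}(f,x)\|_{L_q[-1+8h^2,1-8h^2]}$. $\mathbb M^2$ is the set of convex functions on $(-1,1)$. *)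

theory Defs
  imports "HOL-Analysis.Analysis"
begin

definition phi :: "real \<Rightarrow> real" where
  "phi x = sqrt (1 - x\<^sup>2)"

definition Delta2 :: "real \<Rightarrow> (real \<Rightarrow> real) \<Rightarrow> real \<Rightarrow> real" where
  "Delta2 h f x = (if x - h \<in> {-1..1} \<and> x + h \<in> {-1..1}
                    then f (x - h) - 2 * f x + f (x + h) else 0)"

definition Lq_norm :: "real \<Rightarrow> real set \<Rightarrow> (real \<Rightarrow> real) \<Rightarrow> ennreal" where
  "Lq_norm q S g =
     (let I = (\<integral>\<^sup>+ x \<in> S. ennreal (\<bar>g x\<bar> powr q) \<partial>lborel)
      in if I = \<infinity> then \<infinity> else ennreal ((enn2real I) powr (1 / q)))"

definition Omega2 :: "(real \<Rightarrow> real) \<Rightarrow> real \<Rightarrow> (real \<Rightarrow> real) \<Rightarrow> real \<Rightarrow> ennreal" where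
  "Omega2 f \<delta> w q =
     (SUP h \<in> {0<..\<delta>}. Lq_norm q {-1 + 8 * h\<^sup>2 .. 1 - 8 * h\<^sup>2}
                         (\<lambda>x. w x * Delta2 (h * phi x) f x))"

definition W_space :: "real \<Rightarrow> real \<Rightarrow> (real \<Rightarrow> real) set" where
  "W_space q \<beta> = {f. Lq_norm q {-1..1} (\<lambda>x. phi x powr (2 * \<beta>) * f x) < \<infinity>}"

end

theory Submission
  imports Defs
begin


lemma three_point:
  fixes f :: "real \<Rightarrow> real"
  assumes cf: "convex_on {-1<..<1} f" and a: "-1 < a" and c: "c < 1" and ab: "a < b" and bc: "b < c"
  shows "(c - a) * f b \<le> (c - b) * f a + (b - a) * f c"
proof -
  define \<mu> where "\<mu> = (b - a) / (c - a)"
  have m0: "0 \<le> \<mu>" "\<mu> \<le> 1" using ab bc by (auto simp: \<mu>_def field_simps)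
  have aI: "a \<in> {-1<..<1}" using a ab bc c by auto
  have cI: "c \<in> {-1<..<1}" using a ab bc c by auto
  have "f ((1 - \<mu>) *\<^sub>R a + \<mu> *\<^sub>R c) \<le> (1 - \<mu>) * f a + \<mu> * f c"
    by (rule convex_onD[OF cf m0 aI cI])
  moreover have "(1 - \<mu>) *\<^sub>R a + \<mu> *\<^sub>R c = b"
  proof -
    have "\<mu> * (c - a) = b - a" using ab bc by (simp add: \<mu>_def)
    then show ?thesis by (simp add: algebra_simps)
  qed
  ultimately have "f b \<le> (1 - \<mu>) * f a + \<mu> * f c" by simp
  then have "(c - a) * f b \<le> (c - a) * ((1 - \<mu>) * f a + \<mu> * f c)"
    using ab bc by (intro mult_left_mono) auto
  also have "\<dots> = ((c - a) * (1 - \<mu>)) * f a + ((c - a) * \<mu>) * f c" by (simp add: algebra_simps)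
  also have e1: "(c - a) * \<mu> = b - a" using ab bc by (simp add: \<mu>_def)
  also have "(c - a) * (1 - \<mu>) = c - b" using e1 by (simp add: algebra_simps)
  finally show ?thesis by simp
qed

lemma D2_nonneg:
  fixes f :: "real \<Rightarrow> real"
  assumes cf: "convex_on {-1<..<1} f" and "-1 < x - r" "x + r < 1" "0 \<le> r"
  shows "0 \<le> f (x - r) - 2 * f x + f (x + r)"
proof (cases "r = 0")
  case False
  then have "r > 0" using assms by auto
  have "((x+r) - (x-r)) * f x \<le> ((x+r) - x) * f (x - r) + (x - (x - r)) * f (x + r)"
    using three_point[OF cf, of "x-r" "x+r" x] assms \<open>r>0\<close> by auto
  then have "r * (2 * f x) \<le> r * (f (x - r) + f (x + r))" by (simp add: algebra_simps)
  then show ?thesis using \<open>r > 0\<close> by (simp add: mult_le_cancel_left)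
qed simp

lemma D2_mono:
  fixes f :: "real \<Rightarrow> real"
  assumes cf: "convex_on {-1<..<1} f" and "-1 < x - r2" "x + r2 < 1" "0 \<le> r1" "r1 \<le> r2"
  shows "f (x - r1) - 2 * f x + f (x + r1) \<le> f (x - r2) - 2 * f x + f (x + r2)"
proof (cases "r1 = r2")
  case False
  then have lt: "r1 < r2" using assms by auto
  have 1: "((x+r2) - (x-r2)) * f (x+r1) \<le> ((x+r2) - (x+r1)) * f (x - r2) + ((x+r1) - (x - r2)) * f (x + r2)"
    using three_point[OF cf, of "x-r2" "x+r2" "x+r1"] assms lt by auto
  have 2: "((x+r2) - (x-r2)) * f (x-r1) \<le> ((x+r2) - (x-r1)) * f (x - r2) + ((x-r1) - (x - r2)) * f (x + r2)"
    using three_point[OF cf, of "x-r2" "x+r2" "x-r1"] assms lt by auto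
  have "(2*r2) * (f (x - r1) + f (x + r1)) \<le> (2*r2) * (f (x - r2) + f (x + r2))"
    using 1 2 by (simp add: algebra_simps)
  then have "f (x - r1) + f (x + r1) \<le> f (x - r2) + f (x + r2)"
    using lt assms by (simp add: mult_le_cancel_left)
  then show ?thesis by simp
qed simp

lemma D2_hat:
  fixes f :: "real \<Rightarrow> real"
  assumes cf: "convex_on {-1<..<1} f" and "-1 < x - s" "x + s + 2 * t < 1" "0 \<le> t" "t < s"
  shows "f (x - s) - 2 * f x + f (x + s) \<le> f (x - s) - 2 * f (x + t) + f (x + s + 2 * t)"
proof (cases "t = 0")
  case False
  then have t0: "t > 0" using assms by auto
  have I1: "((x+s) - x) * f (x+t) \<le> ((x+s) - (x+t)) * f x + ((x+t) - x) * f (x + s)"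
    using three_point[OF cf, of x "x+s" "x+t"] assms t0 by auto
  have I2: "((x+s+2*t) - (x+t)) * f (x+s) \<le> ((x+s+2*t) - (x+s)) * f (x+t) + ((x+s) - (x+t)) * f (x+s+2*t)"
    using three_point[OF cf, of "x+t" "x+s+2*t" "x+s"] assms t0 by auto
  have P1: "0 \<le> (s - t) * f x + t * f (x + s) - s * f (x+t)" using I1 by (simp add: algebra_simps)
  have P2: "0 \<le> 2 * t * f (x+t) + (s - t) * f (x+s+2*t) - (s + t) * f (x+s)" using I2 by (simp add: algebra_simps)
  have "(s - t) * (2 * f x - 2 * f (x+t) - f (x+s) + f (x+s+2*t))
        = 2 * ((s - t) * f x + t * f (x + s) - s * f (x+t)) + (2 * t * f (x+t) + (s - t) * f (x+s+2*t) - (s + t) * f (x+s))"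
    by (simp add: algebra_simps)
  also have "\<dots> \<ge> 0" using P1 P2 by simp
  finally have "(s - t) * (2 * f x - 2 * f (x+t) - f (x+s) + f (x+s+2*t)) \<ge> 0" .
  then have "2 * f x - 2 * f (x+t) - f (x+s) + f (x+s+2*t) \<ge> 0"
    using assms by (simp add: zero_le_mult_iff)
  then show ?thesis by simp
qed simp



lemma lin_help: "(w::real) \<le> 5 / 4 * s \<Longrightarrow> s \<le> A / 7 \<Longrightarrow> w * 2 \<le> 5 / 14 * A" by linarith

lemma geo:
  fixes \<delta> x z :: real
  assumes d: "0 < \<delta>" "\<delta> < 1/100" and x: "-1 + 50*\<delta>^2 \<le> x" "x \<le> 1 - 50*\<delta>^2"
    and z: "\<bar>z - x\<bar> \<le> 5/4*(\<delta>*phi x)"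
  shows "0 < phi x" "3/4 * phi x \<le> phi z" "phi z \<le> 2 * phi x" "-1 < x - 4*(\<delta>*phi x)"
    "x + 4*(\<delta>*phi x) < 1" "-1 + 8*\<delta>^2 \<le> z" "z \<le> 1 - 8*\<delta>^2"
proof -
  define T where "T = 1 - \<bar>x\<bar>"
  define A where "A = 1 - x^2"
  have Tx: "\<bar>x\<bar> = 1 - T" by (simp add: T_def)
  have d2: "0 < \<delta>^2" using d by simp
  have T1: "50*\<delta>^2 \<le> T" "T \<le> 1" using x d2 unfolding T_def by arith+
  have T0: "0 < T" using T1 d2 by linarith
  have "A = 1 - \<bar>x\<bar>^2" unfolding A_def by simp
  also have "\<dots> = T * (2 - T)" unfolding T_def by (simp add: power2_eq_square algebra_simps)
  finally have AT0: "A = T * (2 - T)" .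
  have "T * 1 \<le> T * (2 - T)" using T0 T1 by (intro mult_left_mono) auto
  then have AT1: "T \<le> A" using AT0 by simp
  have "T * (2 - T) \<le> T * 2" using T0 T1 by (intro mult_left_mono) auto
  then have AT: "T \<le> A" "A \<le> 2 * T" using AT0 AT1 by linarith+
  have px: "phi x = sqrt A" unfolding phi_def A_def ..
  have A0: "0 < A" using AT T0 by linarith
  show p0: "0 < phi x" using px A0 by simp
  define s where "s = \<delta> * sqrt A"
  have s0: "0 \<le> s" using d A0 by (simp add: s_def)
  have ss: "s^2 = \<delta>^2 * A" using A0 by (simp add: s_def power_mult_distrib)
  have "\<delta>^2 * A \<le> (T/5)^2"
  proof -
    have "\<delta>^2 * A \<le> (T/50) * (2*T)" by (rule mult_mono) (use AT T1 d2 A0 in linarith)+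
    also have "\<dots> \<le> (T/5)^2" by (simp add: power2_eq_square)
    finally show ?thesis .
  qed
  then have sT2: "s^2 \<le> (T/5)^2" unfolding ss .
  have sT: "s \<le> T/5" by (rule power2_le_imp_le[OF sT2]) (use T0 in linarith)
  have "\<delta>^2 * A \<le> (A/7)^2"
  proof -
    have "\<delta>^2 * A \<le> (A/49) * A" by (rule mult_right_mono) (use AT T1 d2 A0 in linarith)+
    also have "\<dots> = (A/7)^2" by (simp add: power2_eq_square)
    finally show ?thesis .
  qed
  then have sA2: "s^2 \<le> (A/7)^2" unfolding ss .
  have sA: "s \<le> A/7" by (rule power2_le_imp_le[OF sA2]) (use A0 in linarith)
  have zx: "\<bar>z - x\<bar> \<le> 5/4 * s" using z px s_def by simp
  have zT: "\<bar>z - x\<bar> \<le> T/4" using zx sT by linarith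
  have "\<bar>z\<bar> \<le> \<bar>z - x\<bar> + \<bar>x\<bar>" using abs_triangle_ineq[of "z-x" x] by simp
  then have az: "\<bar>z\<bar> \<le> 1 - 3*T/4" using zT Tx by linarith
  have az2: "-(1 - 3*T/4) \<le> z" "z \<le> 1 - 3*T/4" using abs_le_D1[OF az] abs_le_D2[OF az] by linarith+
  show "-1 + 8*\<delta>^2 \<le> z" using az2 T1 d2 by linarith
  show "z \<le> 1 - 8*\<delta>^2" using az2 T1 d2 by linarith
  have "\<bar>(1 - z^2) - A\<bar> = \<bar>x - z\<bar> * \<bar>x + z\<bar>"
    unfolding A_def by (simp add: power2_eq_square algebra_simps flip: abs_mult)
  also have "\<dots> \<le> \<bar>z - x\<bar> * 2"
  proof (rule mult_mono)
    show "\<bar>x - z\<bar> \<le> \<bar>z - x\<bar>" by (simp add: abs_minus_commute)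
    have "\<bar>x + z\<bar> \<le> \<bar>x\<bar> + \<bar>z\<bar>" by (rule abs_triangle_ineq)
    then show "\<bar>x + z\<bar> \<le> 2" using az T0 T1 Tx by linarith
  qed simp_all
  also have "\<bar>z - x\<bar> * 2 \<le> 5/14 * A" using zx sA by (rule lin_help)
  finally have dz: "\<bar>(1 - z^2) - A\<bar> \<le> 5/14 * A" .
  have dz2: "A - 5/14 * A \<le> 1 - z^2" "1 - z^2 \<le> A + 5/14 * A" using abs_le_D1[OF dz] abs_le_D2[OF dz] by linarith+
  have pz: "phi z = sqrt (1 - z^2)" unfolding phi_def ..
  have "(3/4 * sqrt A)^2 = 9/16 * A" using A0 by (simp add: power_mult_distrib power_divide)
  then have "(3/4 * sqrt A)^2 \<le> 1 - z^2" using dz2 A0 by linarith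
  then show "3/4 * phi x \<le> phi z" unfolding px pz by (rule real_le_rsqrt)
  have "sqrt (1 - z^2) \<le> sqrt (4 * A)" using dz2 A0 by (intro real_sqrt_le_mono) linarith
  also have "sqrt (4 * A) = 2 * sqrt A" by (simp add: real_sqrt_mult)
  finally show "phi z \<le> 2 * phi x" unfolding px pz .
  show "-1 < x - 4*(\<delta>*phi x)"
    using sT T0 abs_ge_self[of x] abs_ge_minus_self[of x] Tx unfolding px s_def[symmetric] by linarith
  show "x + 4*(\<delta>*phi x) < 1"
    using sT T0 abs_ge_self[of x] abs_ge_minus_self[of x] Tx unfolding px s_def[symmetric] by linarith+
qed



lemma phi_pos: "-1 < (x::real) \<Longrightarrow> x < 1 \<Longrightarrow> 0 < phi x"
proof -
  assume "-1 < x" "x < 1"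
  then have "0 < (1 - x) * (1 + x)" by simp
  then have "0 < 1 - x^2" by (simp add: algebra_simps power2_eq_square)
  then show ?thesis by (simp add: phi_def)
qed

lemma phi_x_pos:
  assumes "0 < (\<delta>::real)" "-1 + 50*\<delta>^2 \<le> x" "x \<le> 1 - 50*\<delta>^2"
  shows "0 < phi x"
proof -
  have "0 < \<delta>^2" using assms by simp
  then show ?thesis using assms by (intro phi_pos) linarith+
qed

lemma Delta2_in:
  assumes "-1 \<le> x - h" "x + h \<le> 1" "0 \<le> h"
  shows "Delta2 h f x = f (x - h) - 2 * f x + f (x + h)"
  using assms by (simp add: Delta2_def)

lemma stepG:
  fixes f :: "real \<Rightarrow> real"
  assumes cf: "convex_on {-1<..<1} f" and d: "0 < \<delta>" "\<delta> < 1/100"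
    and x: "-1 + 50*\<delta>^2 \<le> x" "x \<le> 1 - 50*\<delta>^2"
    and z: "\<bar>z - x\<bar> \<le> 5/4*(\<delta>*phi x)" and \<sigma>: "0 \<le> \<sigma>" "\<sigma> \<le> 3/4*(\<delta>*phi x)"
  shows "f (z - \<sigma>) - 2 * f z + f (z + \<sigma>) \<le> Delta2 (\<delta> * phi z) f z"
proof -
  note g = geo[OF d x z]
  have px: "0 < phi x" using phi_x_pos[OF d(1) x] .
  have g0: "-1 < x - 4*(\<delta>*phi x)" "x + 4*(\<delta>*phi x) < 1" using geo(4,5)[OF d x, of x] px d by simp_all
  define s where "s = \<delta> * phi x"
  have s0: "0 \<le> s" using g(1) d by (simp add: s_def)
  have pz: "0 \<le> \<delta> * phi z" using g(1,2) d by simp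
  have r1: "\<delta> * phi z \<le> 2 * s" using g(3) d by (simp add: s_def)
  have r2: "\<sigma> \<le> \<delta> * phi z"
  proof -
    have "\<delta> * (3/4 * phi x) \<le> \<delta> * phi z" using g(2) d by (intro mult_left_mono) auto
    then show ?thesis using \<sigma> by (simp add: algebra_simps)
  qed
  have zz: "z - x \<le> 5/4 * s" "x - z \<le> 5/4 * s" using abs_le_D1[OF z] abs_le_D2[OF z] by (simp_all add: s_def)
  have i1: "-1 < z - \<delta> * phi z" "z + \<delta> * phi z < 1"
    using g(4) g(5) zz r1 s0 unfolding s_def[symmetric] by linarith+
  have "f (z - \<sigma>) - 2 * f z + f (z + \<sigma>) \<le> f (z - \<delta> * phi z) - 2 * f z + f (z + \<delta> * phi z)"
    by (rule D2_mono[OF cf i1 \<sigma>(1) r2])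
  also have "\<dots> = Delta2 (\<delta> * phi z) f z" using i1 pz by (intro Delta2_in[symmetric]) linarith+
  finally show ?thesis .
qed

lemma add3_mono: "(a1::real) \<le> b1 \<Longrightarrow> a2 \<le> b2 \<Longrightarrow> a3 \<le> b3 \<Longrightarrow> a1 + 2 * a2 + a3 \<le> b1 + 2 * b2 + b3"
  by linarith

lemma chain:
  fixes f :: "real \<Rightarrow> real"
  assumes cf: "convex_on {-1<..<1} f" and d: "0 < \<delta>" "\<delta> < 1/100"
    and x: "-1 + 50*\<delta>^2 \<le> x" "x \<le> 1 - 50*\<delta>^2"
    and t: "0 \<le> t" "t \<le> \<delta> * phi x / 2"
  shows "Delta2 (\<delta> * phi x) f x \<le> Delta2 (\<delta> * phi (x + t - (\<delta> * phi x + t)/2)) f (x + t - (\<delta> * phi x + t)/2)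
     + 2 * Delta2 (\<delta> * phi (x + t)) f (x + t)
     + Delta2 (\<delta> * phi (x + t + (\<delta> * phi x + t)/2)) f (x + t + (\<delta> * phi x + t)/2)"
proof -
  define s where "s = \<delta> * phi x"
  define \<sigma> where "\<sigma> = (s + t) / 2"
  have px: "0 < phi x" using phi_x_pos[OF d(1) x] .
  have g0: "-1 < x - 4*(\<delta>*phi x)" "x + 4*(\<delta>*phi x) < 1" using geo(4,5)[OF d x, of x] px d by simp_all
  have sp: "0 < s" using px d by (simp add: s_def)
  have in0: "-1 < x - 4 * s" "x + 4 * s < 1" using g0 by (simp_all add: s_def)
  have "Delta2 s f x = f (x - s) - 2 * f x + f (x + s)" using in0 sp by (intro Delta2_in) linarith+
  also have "\<dots> \<le> f (x - s) - 2 * f (x + t) + f (x + s + 2 * t)"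
    using in0 sp t unfolding s_def[symmetric] by (intro D2_hat[OF cf]) linarith+
  also have "\<dots> = (f ((x + t - \<sigma>) - \<sigma>) - 2 * f (x + t - \<sigma>) + f ((x + t - \<sigma>) + \<sigma>))
      + 2 * (f ((x + t) - \<sigma>) - 2 * f (x + t) + f ((x + t) + \<sigma>))
      + (f ((x + t + \<sigma>) - \<sigma>) - 2 * f (x + t + \<sigma>) + f ((x + t + \<sigma>) + \<sigma>))"
  proof -
    have e1: "(x + t - \<sigma>) - \<sigma> = x - s" "(x + t - \<sigma>) + \<sigma> = x + t"
      "(x + t + \<sigma>) - \<sigma> = x + t" "(x + t + \<sigma>) + \<sigma> = x + s + 2 * t"
      by (simp_all add: \<sigma>_def field_simps)
    show ?thesis unfolding e1 by (simp add: algebra_simps)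
  qed
  also have "\<dots> \<le> Delta2 (\<delta> * phi (x + t - \<sigma>)) f (x + t - \<sigma>) + 2 * Delta2 (\<delta> * phi (x + t)) f (x + t)
      + Delta2 (\<delta> * phi (x + t + \<sigma>)) f (x + t + \<sigma>)"
  proof -
    have tt: "t \<le> s/2" using t by (simp add: s_def)
    have sd: "\<sigma> = s / 2 + t / 2" by (simp add: \<sigma>_def)
    have s1a: "0 \<le> \<sigma>" using sp t tt sd by linarith
    have s1b: "\<sigma> \<le> 3/4 * s" using sp t tt sd by linarith
    note s1 = s1a s1b[unfolded s_def]
    have "\<bar>t - \<sigma>\<bar> \<le> 5/4 * s" using sp t tt sd by (simp add: abs_le_iff; linarith?)
    then have z1: "\<bar>(x + t - \<sigma>) - x\<bar> \<le> 5/4*(\<delta>*phi x)" by (simp add: s_def)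
    have "\<bar>t\<bar> \<le> 5/4 * s" using sp t tt sd by (simp add: abs_le_iff; linarith?)
    then have z2: "\<bar>(x + t) - x\<bar> \<le> 5/4*(\<delta>*phi x)" by (simp add: s_def)
    have "\<bar>t + \<sigma>\<bar> \<le> 5/4 * s" using sp t tt sd by (simp add: abs_le_iff; linarith?)
    then have z3: "\<bar>(x + t + \<sigma>) - x\<bar> \<le> 5/4*(\<delta>*phi x)" by (simp add: s_def)
    show ?thesis
      by (rule add3_mono[OF stepG[OF cf d x z1 s1] stepG[OF cf d x z2 s1] stepG[OF cf d x z3 s1]])
  qed
  finally show ?thesis by (simp only: \<sigma>_def s_def)
qed



lemma phi_cont: "continuous_on UNIV phi"
  unfolding phi_def[abs_def] by (intro continuous_intros)

lemma phi_meas[measurable]: "phi \<in> borel_measurable borel"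
  by (rule borel_measurable_continuous_onI[OF phi_cont])

lemma G_meas:
  fixes f :: "real \<Rightarrow> real"
  assumes cf: "continuous_on {-1..1} f"
  shows "(\<lambda>z. Delta2 (c * phi z) f z) \<in> borel_measurable borel"
proof -
  define cl where "cl = (\<lambda>y::real. max (-1) (min 1 y))"
  define f0 where "f0 = (\<lambda>y. f (cl y))"
  have clc: "continuous_on UNIV cl" unfolding cl_def by (intro continuous_intros)
  have cli: "cl ` UNIV \<subseteq> {-1..1}" unfolding cl_def by auto
  have f0c: "continuous_on UNIV f0" unfolding f0_def
    by (rule continuous_on_compose2[OF cf clc cli])
  have f0m[measurable]: "f0 \<in> borel_measurable borel" by (rule borel_measurable_continuous_onI[OF f0c])
  have cle: "y \<in> {-1..1} \<Longrightarrow> f0 y = f y" for y unfolding f0_def cl_def by auto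
  have eq: "Delta2 (c * phi z) f z = (if -1 \<le> z - c * phi z \<and> z - c * phi z \<le> 1 \<and> -1 \<le> z + c * phi z \<and> z + c * phi z \<le> 1
       then f0 (z - c * phi z) - 2 * f0 z + f0 (z + c * phi z) else 0)" for z
  proof (cases "-1 \<le> z - c * phi z \<and> z - c * phi z \<le> 1 \<and> -1 \<le> z + c * phi z \<and> z + c * phi z \<le> 1")
    case True
    then have "z \<in> {-1..1}" by auto
    with True show ?thesis by (simp add: Delta2_def cle)
  next
    case False
    then show ?thesis by (auto simp: Delta2_def)
  qed
  show ?thesis unfolding eq by measurable
qed

lemma wratio:
  fixes p pz a :: real
  assumes p: "0 < p" "p / 2 \<le> pz" "pz \<le> 2 * p"
  shows "p powr a \<le> 2 powr \<bar>a\<bar> * pz powr a"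
proof -
  have pz0: "0 < pz" using p by linarith
  have "p powr a = (p / pz) powr a * pz powr a" using p pz0 by (simp add: powr_divide)
  also have "(p / pz) powr a \<le> 2 powr \<bar>a\<bar>"
  proof (cases "0 \<le> a")
    case True
    have "p / pz \<le> 2" using p pz0 by (simp add: divide_le_eq)
    then have "(p / pz) powr a \<le> 2 powr a" using True p pz0 by (intro powr_mono2) auto
    then show ?thesis using True by simp
  next
    case False
    have "(p / pz) powr a = (pz / p) powr (- a)" using p pz0
      by (simp add: powr_minus_divide powr_divide)
    also have "\<dots> \<le> 2 powr (- a)"
    proof -
      have "pz / p \<le> 2" using p pz0 by (simp add: divide_le_eq)
      then show ?thesis using False p pz0 by (intro powr_mono2) auto
    qed
    finally show ?thesis using False by simp
  qed
  then have "(p / pz) powr a * pz powr a \<le> 2 powr \<bar>a\<bar> * pz powr a"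
    by (intro mult_right_mono) auto
  finally show ?thesis .
qed



lemma aff_int:
  fixes g :: "real \<Rightarrow> ennreal"
  assumes gm[measurable]: "g \<in> borel_measurable borel" and e: "0 < e"
    and R: "integral\<^sup>N lborel g = ennreal r" and r: "0 \<le> r"
  shows "(\<integral>\<^sup>+t. g (c + e * t) \<partial>lborel) = ennreal (r / e)"
proof -
  define X where "X = (\<integral>\<^sup>+t. g (c + e * t) \<partial>lborel)"
  have "ennreal r = ennreal e * X"
    using nn_integral_real_affine[OF gm, of e c] e R unfolding X_def by simp
  then have "ennreal (1/e) * ennreal r = (ennreal (1/e) * ennreal e) * X" by (simp add: mult.assoc)
  also have "ennreal (1/e) * ennreal e = 1" using e by (simp flip: ennreal_mult)
  finally show ?thesis using e r unfolding X_def by (simp flip: ennreal_mult)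
qed

lemma near_pt:
  fixes f :: "real \<Rightarrow> real"
  assumes cf: "convex_on {-1<..<1} f" and d: "0 < \<delta>" "\<delta> < 1/100"
    and x: "-1 + 50*\<delta>^2 \<le> x" "x \<le> 1 - 50*\<delta>^2"
    and z: "\<bar>z - x\<bar> \<le> 5/4*(\<delta>*phi x)"
  shows "0 \<le> Delta2 (\<delta> * phi z) f z"
    "Delta2 (\<delta> * phi z) f z \<le> 2 powr \<bar>a\<bar> / phi x powr a * \<bar>phi z powr a * Delta2 (\<delta> * phi z) f z\<bar>"
    "z \<in> {-1 + 8*\<delta>^2 .. 1 - 8*\<delta>^2}"
proof -
  note g = geo[OF d x z]
  have px: "0 < phi x" by (rule g(1))
  have pz: "0 < phi z" using g(1,2) by linarith
  have "f (z - 0) - 2 * f z + f (z + 0) \<le> Delta2 (\<delta> * phi z) f z"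
    using px d by (intro stepG[OF cf d x z]) auto
  then show G0: "0 \<le> Delta2 (\<delta> * phi z) f z" by simp
  show "z \<in> {-1 + 8*\<delta>^2 .. 1 - 8*\<delta>^2}" using g(6,7) by simp
  have wr: "phi x powr a \<le> 2 powr \<bar>a\<bar> * phi z powr a"
    using px g(2,3) by (intro wratio) auto
  have wx: "0 < phi x powr a" using px by simp
  have wz: "0 < phi z powr a" using pz by simp
  have "Delta2 (\<delta> * phi z) f z = 1 * Delta2 (\<delta> * phi z) f z" by simp
  also have "\<dots> \<le> (2 powr \<bar>a\<bar> * phi z powr a / phi x powr a) * Delta2 (\<delta> * phi z) f z"
    using wr wx G0 by (intro mult_right_mono) (auto simp: field_simps)
  also have "\<dots> = 2 powr \<bar>a\<bar> / phi x powr a * \<bar>phi z powr a * Delta2 (\<delta> * phi z) f z\<bar>"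
    using wz G0 by (simp add: abs_mult)
  finally show "Delta2 (\<delta> * phi z) f z \<le> 2 powr \<bar>a\<bar> / phi x powr a * \<bar>phi z powr a * Delta2 (\<delta> * phi z) f z\<bar>" .
qed

lemma sup_bound:
  fixes f :: "real \<Rightarrow> real"
  assumes cf: "convex_on {-1<..<1} f" and fc: "continuous_on {-1..1} f" and d: "0 < \<delta>" "\<delta> < 1/100"
    and x: "-1 + 50*\<delta>^2 \<le> x" "x \<le> 1 - 50*\<delta>^2"
    and R: "(\<integral>\<^sup>+z. ennreal \<bar>phi z powr a * Delta2 (\<delta> * phi z) f z\<bar> * indicator {-1 + 8*\<delta>^2 .. 1 - 8*\<delta>^2} z \<partial>lborel) = ennreal r"
    and r0: "0 \<le> r"
  shows "\<delta> * phi x * Delta2 (\<delta> * phi x) f x * phi x powr a \<le> 10 * 2 powr \<bar>a\<bar> * r"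
proof -
  define G where "G = (\<lambda>z. Delta2 (\<delta> * phi z) f z)"
  define I where "I = {-1 + 8*\<delta>^2 .. 1 - 8*\<delta>^2}"
  define g where "g = (\<lambda>z. ennreal \<bar>phi z powr a * G z\<bar> * indicator I z)"
  define K where "K = 2 powr \<bar>a\<bar>"
  define s where "s = \<delta> * phi x"
  define wx where "wx = phi x powr a"
  have Gm[measurable]: "G \<in> borel_measurable borel" unfolding G_def by (rule G_meas[OF fc])
  have gm[measurable]: "g \<in> borel_measurable borel" unfolding g_def I_def by measurable
  have Rg: "integral\<^sup>N lborel g = ennreal r" using R unfolding g_def G_def I_def .
  have px: "0 < phi x" using phi_x_pos[OF d(1) x] .
  have sp: "0 < s" using px d by (simp add: s_def)
  have wx0: "0 < wx" using px by (simp add: wx_def)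
  have K0: "0 < K" by (simp add: K_def)
  have Gd: "G z = Delta2 (\<delta> * phi z) f z" for z by (simp add: G_def)
  note np = near_pt(1)[OF cf d x, folded Gd] near_pt(2)[where a=a, OF cf d x, folded Gd K_def wx_def]
    near_pt(3)[OF cf d x]
  have Gx0: "0 \<le> G x" using np(1)[of x] sp by (simp add: s_def)
  define c1 where "c1 = x - s/2"
  define c3 where "c3 = x + s/2"
  have pt: "ennreal (G x) * indicator {0..s/2} t
      \<le> ennreal (K / wx) * (g (c1 + 1/2 * t) + 2 * g (x + 1 * t) + g (c3 + 3/2 * t))" for t
  proof (cases "t \<in> {0..s/2}")
    case False
    then show ?thesis by simp
  next
    case True
    then have t: "0 \<le> t" "t \<le> \<delta> * phi x / 2" by (auto simp: s_def)
    have ch: "G x \<le> G (x + t - (\<delta> * phi x + t)/2) + 2 * G (x + t) + G (x + t + (\<delta> * phi x + t)/2)"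
      unfolding G_def by (rule chain[OF cf d x t])
    have e1: "x + t - (\<delta> * phi x + t)/2 = c1 + 1/2 * t" by (simp add: c1_def s_def field_simps)
    have e3: "x + t + (\<delta> * phi x + t)/2 = c3 + 3/2 * t" by (simp add: c3_def s_def field_simps)
    have b1: "\<bar>(c1 + 1/2 * t) - x\<bar> \<le> 5/4*(\<delta>*phi x)" using t sp
      by (simp add: c1_def s_def[symmetric] abs_le_iff; linarith?)
    have b2: "\<bar>(x + 1 * t) - x\<bar> \<le> 5/4*(\<delta>*phi x)" using t sp
      by (simp add: s_def[symmetric] abs_le_iff; linarith?)
    have b3: "\<bar>(c3 + 3/2 * t) - x\<bar> \<le> 5/4*(\<delta>*phi x)" using t sp
      by (simp add: c3_def s_def[symmetric] abs_le_iff; linarith?)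
    define z1 where "z1 = c1 + 1/2 * t"
    define z2 where "z2 = x + 1 * t"
    define z3 where "z3 = c3 + 3/2 * t"
    have ch2: "G x \<le> G z1 + 2 * G z2 + G z3" using ch unfolding e1 e3 z1_def z2_def z3_def by simp
    define A where "A = (\<lambda>z. \<bar>phi z powr a * G z\<bar>)"
    have gz: "g z = ennreal (A z)" if "z \<in> I" for z using that by (simp add: g_def A_def)
    have A0: "0 \<le> A z" for z by (simp add: A_def)
    have q1: "G z1 \<le> K / wx * A z1" using np(2)[OF b1[folded z1_def]] by (simp add: A_def)
    have q2: "G z2 \<le> K / wx * A z2" using np(2)[OF b2[folded z2_def]] by (simp add: A_def)
    have q3: "G z3 \<le> K / wx * A z3" using np(2)[OF b3[folded z3_def]] by (simp add: A_def)
    have E: "ennreal (A z1 + 2 * A z2 + A z3) = ennreal (A z1) + 2 * ennreal (A z2) + ennreal (A z3)"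
    proof -
      have "ennreal (A z1 + 2 * A z2 + A z3) = ennreal (A z1) + ennreal (2 * A z2) + ennreal (A z3)"
        using A0 by (simp add: ennreal_plus)
      also have "ennreal (2 * A z2) = 2 * ennreal (A z2)" using A0 by (simp add: ennreal_mult)
      finally show ?thesis .
    qed
    have "G x \<le> K / wx * A z1 + 2 * (K / wx * A z2) + K / wx * A z3"
      by (rule order_trans[OF ch2 add3_mono[OF q1 q2 q3]])
    also have "\<dots> = K / wx * (A z1 + 2 * A z2 + A z3)" by (simp add: algebra_simps)
    finally have "G x \<le> K / wx * (A z1 + 2 * A z2 + A z3)" .
    then have "ennreal (G x) \<le> ennreal (K / wx * (A z1 + 2 * A z2 + A z3))" by (rule ennreal_leI)
    also have "\<dots> = ennreal (K / wx) * ennreal (A z1 + 2 * A z2 + A z3)"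
      using K0 wx0 A0 by (intro ennreal_mult) (auto intro: add_nonneg_nonneg)
    also have "\<dots> = ennreal (K / wx) * (ennreal (A z1) + 2 * ennreal (A z2) + ennreal (A z3))"
      by (simp only: E)
    also have "\<dots> = ennreal (K / wx) * (g z1 + 2 * g z2 + g z3)"
      using gz np(3)[OF b1[folded z1_def]] np(3)[OF b2[folded z2_def]] np(3)[OF b3[folded z3_def]]
      unfolding I_def by simp
    finally show ?thesis using True unfolding z1_def z2_def z3_def by simp
  qed
  have i1: "(\<integral>\<^sup>+t. g (c1 + 1/2 * t) \<partial>lborel) = ennreal (r / (1/2))" by (rule aff_int[OF gm _ Rg r0]) simp
  have i2: "(\<integral>\<^sup>+t. g (x + 1 * t) \<partial>lborel) = ennreal (r / 1)" by (rule aff_int[OF gm _ Rg r0]) simp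
  have i3: "(\<integral>\<^sup>+t. g (c3 + 3/2 * t) \<partial>lborel) = ennreal (r / (3/2))" by (rule aff_int[OF gm _ Rg r0]) simp
  have "ennreal (G x) * ennreal (s/2) = (\<integral>\<^sup>+t. ennreal (G x) * indicator {0..s/2} t \<partial>lborel)"
    using sp by (simp add: nn_integral_cmult_indicator)
  also have "\<dots> \<le> (\<integral>\<^sup>+t. ennreal (K / wx) * (g (c1 + 1/2 * t) + 2 * g (x + 1 * t) + g (c3 + 3/2 * t)) \<partial>lborel)"
    by (intro nn_integral_mono pt)
  also have "\<dots> = ennreal (K / wx) * ((\<integral>\<^sup>+t. g (c1 + 1/2 * t) \<partial>lborel) + 2 * (\<integral>\<^sup>+t. g (x + 1 * t) \<partial>lborel)
        + (\<integral>\<^sup>+t. g (c3 + 3/2 * t) \<partial>lborel))"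
    by (simp add: nn_integral_cmult nn_integral_add)
  also have "\<dots> = ennreal (K / wx) * (ennreal (r / (1/2)) + 2 * ennreal (r / 1) + ennreal (r / (3/2)))"
    unfolding i1 i2 i3 ..
  also have "\<dots> = ennreal (K / wx * (14/3 * r))"
  proof -
    have a1: "ennreal (r / (1/2)) = ennreal (2 * r)" by (simp add: mult.commute)
    have a2: "2 * ennreal (r / 1) = ennreal (2 * r)" using r0 by (simp add: ennreal_mult)
    have "ennreal (14/3 * r) = ennreal (2 * r + 2 * r + r / (3/2))" by (simp add: algebra_simps)
    also have "\<dots> = ennreal (2 * r) + ennreal (2 * r) + ennreal (r / (3/2))"
    proof -
      have p1: "0 \<le> 2 * r" "0 \<le> r / (3/2)" "0 \<le> 2 * r + 2 * r" using r0 by auto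
      show ?thesis by (simp only: ennreal_plus[OF p1(3) p1(2)] ennreal_plus[OF p1(1) p1(1)])
    qed
    finally have "ennreal (r / (1/2)) + 2 * ennreal (r / 1) + ennreal (r / (3/2)) = ennreal (14/3 * r)"
      unfolding a1 a2 by simp
    moreover have "ennreal (K / wx) * ennreal (14/3 * r) = ennreal (K / wx * (14/3 * r))"
      by (rule ennreal_mult[symmetric]) (use r0 K0 wx0 in auto)
    ultimately show ?thesis by (simp only:)
  qed
  finally have "ennreal (G x * (s/2)) \<le> ennreal (K / wx * (14/3 * r))"
    using Gx0 sp by (simp only: ennreal_mult[OF Gx0, of "s/2", symmetric])
  then have "G x * (s/2) \<le> K / wx * (14/3 * r)"
    using K0 wx0 r0 by (subst (asm) ennreal_le_iff) auto
  then have "G x * (s/2) * wx \<le> K * (14/3 * r)" using wx0 by (simp add: field_simps)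
  then have "s * G x * wx \<le> K * (28/3 * r)" by (simp add: algebra_simps)
  also have "\<dots> \<le> 10 * K * r" using K0 r0 by (simp add: algebra_simps)
  finally show ?thesis unfolding s_def G_def wx_def K_def by simp
qed



lemma wid:
  fixes p g q b :: real
  assumes p: "0 < p" and g: "0 \<le> g" and q: "1 < q"
  shows "(p powr b * g) powr q = (p powr (b - 1 + 1/q) * g) * (p powr (b - 1 + 1/q) * g * p) powr (q - 1)"
proof (cases "g = 0")
  case True then show ?thesis by simp
next
  case False
  then have g0: "0 < g" using g by simp
  define v where "v = p powr (b - 1 + 1/q) * g"
  have v0: "0 < v" using p g0 by (simp add: v_def)
  have "p powr b = p powr (b - 1 + 1/q) * p powr (1 - 1/q)" using p by (simp flip: powr_add)
  then have "p powr b * g = v * p powr (1 - 1/q)" by (simp add: v_def algebra_simps)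
  then have "(p powr b * g) powr q = v powr q * (p powr (1 - 1/q)) powr q"
    using v0 p by (simp add: powr_mult)
  also have "(p powr (1 - 1/q)) powr q = p powr (q - 1)" using p q by (simp add: powr_powr algebra_simps)
  also have "v powr q = v * v powr (q - 1)"
  proof -
    have "v powr q = v powr (1 + (q - 1))" by simp
    also have "\<dots> = v powr 1 * v powr (q - 1)" by (rule powr_add)
    finally show ?thesis using v0 by simp
  qed
  also have "v * v powr (q - 1) * p powr (q - 1) = v * (v * p) powr (q - 1)"
    using v0 p by (simp add: powr_mult)
  finally show ?thesis by (simp add: v_def)
qed

lemma final_alg:
  fixes B d r q :: real
  assumes B: "0 < B" and d: "0 < d" and r: "0 \<le> r" and q: "1 < q"
  shows "((B * r / d) powr (q - 1) * r) powr (1/q) \<le> B powr (1 - 1/q) * d powr (1/q - 1) * r"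
proof (cases "r = 0")
  case True then show ?thesis by simp
next
  case False
  then have r0: "0 < r" using r by simp
  have "((B * r / d) powr (q - 1) * r) powr (1/q) = ((B * r / d) powr (q - 1)) powr (1/q) * r powr (1/q)"
    using B d r0 by (simp add: powr_mult)
  also have "((B * r / d) powr (q - 1)) powr (1/q) = (B * r / d) powr (1 - 1/q)"
    using q by (simp add: powr_powr diff_divide_distrib)
  also have "(B * r / d) powr (1 - 1/q) = B powr (1 - 1/q) * r powr (1 - 1/q) / d powr (1 - 1/q)"
    using B d r0 by (simp add: powr_mult powr_divide)
  also have "B powr (1 - 1/q) * r powr (1 - 1/q) / d powr (1 - 1/q) * r powr (1/q)
      = B powr (1 - 1/q) * (r powr (1 - 1/q) * r powr (1/q)) / d powr (1 - 1/q)" by simp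
  also have "r powr (1 - 1/q) * r powr (1/q) = r" using r0 by (simp flip: powr_add)
  also have "B powr (1 - 1/q) * r / d powr (1 - 1/q) = B powr (1 - 1/q) * d powr (1/q - 1) * r"
  proof -
    have e: "1/q - 1 = - (1 - 1/q)" by simp
    have "d powr (1/q - 1) = 1 / d powr (1 - 1/q)" unfolding e by (rule powr_minus_divide)
    then show ?thesis by simp
  qed
  finally show ?thesis by simp
qed



lemma phi_nonneg: "-1 \<le> (x::real) \<Longrightarrow> x \<le> 1 \<Longrightarrow> 0 \<le> phi x"
proof -
  assume "-1 \<le> x" "x \<le> 1"
  then have "0 \<le> (1 - x) * (1 + x)" by simp
  then have "0 \<le> 1 - x^2" by (simp add: algebra_simps power2_eq_square)
  then show ?thesis by (simp add: phi_def)
qed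

lemma lin_D2: "(f::real\<Rightarrow>real) (x - r) = a * (x - r) + b \<Longrightarrow> f x = a * x + b \<Longrightarrow> f (x + r) = a * (x + r) + b
   \<Longrightarrow> f (x - r) - 2 * f x + f (x + r) = 0"
  by (simp add: algebra_simps)

lemma endzero:
  fixes f :: "real \<Rightarrow> real"
  assumes d: "0 < \<delta>" "\<delta> < 1/100" and h: "0 < h" "h \<le> \<delta>"
    and L: "\<forall>x\<in>{-1 .. -1 + 100 * \<delta>\<^sup>2}. f x = a1 * x + b1"
    and Rt: "\<forall>x\<in>{1 - 100 * \<delta>\<^sup>2 .. 1}. f x = a2 * x + b2"
    and x: "-1 \<le> x" "x \<le> 1" and out: "x < -1 + 50*\<delta>^2 \<or> 1 - 50*\<delta>^2 < x"
  shows "Delta2 (h * phi x) f x = 0"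
proof (cases "x - h * phi x \<in> {-1..1} \<and> x + h * phi x \<in> {-1..1}")
  case False then show ?thesis unfolding Delta2_def by (rule if_not_P)
next
  case True
  define r where "r = h * phi x"
  have p0: "0 \<le> phi x" using x by (rule phi_nonneg)
  have r0: "0 \<le> r" using h p0 by (simp add: r_def)
  have C: "-1 \<le> x - r" "x + r \<le> 1" using True by (auto simp: r_def)
  have d2: "0 < \<delta>^2" using d by simp
  have "1 - x^2 \<le> 100 * \<delta>^2"
  proof -
    have e: "1 - x^2 = (1 - x) * (1 + x)" by (simp add: algebra_simps power2_eq_square)
    show ?thesis
    proof (cases "x < -1 + 50*\<delta>^2")
      case True
      have "(1 - x) * (1 + x) \<le> 2 * (50 * \<delta>^2)" using True x by (intro mult_mono) auto
      then show ?thesis unfolding e by simp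
    next
      case False
      then have "1 - 50*\<delta>^2 < x" using out by simp
      then have "(1 - x) * (1 + x) \<le> (50 * \<delta>^2) * 2" using x by (intro mult_mono) auto
      then show ?thesis unfolding e by simp
    qed
  qed
  then have "phi x \<le> 10 * \<delta>" unfolding phi_def using d by (intro real_le_lsqrt) (auto simp: power_mult_distrib)
  then have "h * phi x \<le> \<delta> * (10 * \<delta>)" using h p0 d by (intro mult_mono) auto
  then have rb: "r \<le> 10 * \<delta>^2" by (simp add: r_def power2_eq_square)
  show ?thesis
  proof (cases "x < -1 + 50*\<delta>^2")
    case True
    have "f (x - r) - 2 * f x + f (x + r) = 0"
      by (rule lin_D2[where a=a1 and b=b1]) (use L C r0 rb True x d2 in auto)
    then show ?thesis using C r0 by (simp add: Delta2_def r_def)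
  next
    case False
    then have "1 - 50*\<delta>^2 < x" using out by simp
    then have "f (x - r) - 2 * f x + f (x + r) = 0"
      by (intro lin_D2[where a=a2 and b=b2]) (use Rt C r0 rb x d2 in auto)
    then show ?thesis using C r0 by (simp add: Delta2_def r_def)
  qed
qed

lemma cover3: "0 < (e::real) \<Longrightarrow> e < 1/10000 \<Longrightarrow> (- 1 \<le> x \<and> x \<le> 1) =
     (- 1 \<le> x \<and> x \<le> - 1 + 100 * e \<or> - 1 + 50 * e \<le> x \<and> x \<le> 1 - 50 * e \<or> 1 - 100 * e \<le> x \<and> x \<le> 1)"
  by auto

lemma fcont:
  fixes f :: "real \<Rightarrow> real"
  assumes cf: "convex_on {-1<..<1} f" and d: "0 < \<delta>" "\<delta> < 1/100"
    and L: "\<forall>x\<in>{-1 .. -1 + 100 * \<delta>\<^sup>2}. f x = a1 * x + b1"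
    and Rt: "\<forall>x\<in>{1 - 100 * \<delta>\<^sup>2 .. 1}. f x = a2 * x + b2"
  shows "continuous_on {-1..1} f"
proof -
  have d2a: "0 < \<delta>^2" using d by simp
  have "\<delta> * \<delta> < (1/100) * (1/100)" using d by (intro mult_strict_mono) auto
  then have d2: "0 < \<delta>^2" "\<delta>^2 < 1/10000" using d2a by (simp_all add: power2_eq_square)
  have c1: "continuous_on {-1 .. -1 + 100 * \<delta>\<^sup>2} f"
    by (rule continuous_on_eq[of _ "\<lambda>x. a1 * x + b1"]) (auto intro: continuous_intros simp: L)
  have c3: "continuous_on {1 - 100 * \<delta>\<^sup>2 .. 1} f"
    by (rule continuous_on_eq[of _ "\<lambda>x. a2 * x + b2"]) (auto intro: continuous_intros simp: Rt)
  have c2: "continuous_on {-1 + 50 * \<delta>\<^sup>2 .. 1 - 50 * \<delta>\<^sup>2} f"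
  proof (rule continuous_on_subset[OF convex_on_continuous[OF open_greaterThanLessThan cf]])
    show "{-1 + 50 * \<delta>\<^sup>2 .. 1 - 50 * \<delta>\<^sup>2} \<subseteq> {-1<..<1}"
    proof
      fix x assume "x \<in> {-1 + 50 * \<delta>\<^sup>2 .. 1 - 50 * \<delta>\<^sup>2}"
      then have "-1 + 50 * \<delta>\<^sup>2 \<le> x" "x \<le> 1 - 50 * \<delta>\<^sup>2" by auto
      then show "x \<in> {-1<..<1}" unfolding greaterThanLessThan_iff using d2a by (intro conjI; linarith)
    qed
  qed
  have "{-1..1} = {-1 .. -1 + 100 * \<delta>\<^sup>2} \<union> ({-1 + 50 * \<delta>\<^sup>2 .. 1 - 50 * \<delta>\<^sup>2} \<union> {1 - 100 * \<delta>\<^sup>2 .. 1})"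
  proof (rule set_eqI)
    fix x
    show "x \<in> {-1..1} \<longleftrightarrow> x \<in> {-1 .. -1 + 100 * \<delta>\<^sup>2} \<union> ({-1 + 50 * \<delta>\<^sup>2 .. 1 - 50 * \<delta>\<^sup>2} \<union> {1 - 100 * \<delta>\<^sup>2 .. 1})"
      unfolding Un_iff atLeastAtMost_iff using cover3[OF d2a d2(2)] .
  qed
  moreover have "continuous_on ({-1 .. -1 + 100 * \<delta>\<^sup>2} \<union> ({-1 + 50 * \<delta>\<^sup>2 .. 1 - 50 * \<delta>\<^sup>2} \<union> {1 - 100 * \<delta>\<^sup>2 .. 1})) f"
    by (intro continuous_on_closed_Un c1 c2 c3 closed_Un) auto
  ultimately show ?thesis by simp
qed

lemma Lq1: "Lq_norm 1 S g = (\<integral>\<^sup>+x. ennreal \<bar>g x\<bar> * indicator S x \<partial>lborel)"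
proof -
  define I where "I = (\<integral>\<^sup>+x. ennreal \<bar>g x\<bar> * indicator S x \<partial>lborel)"
  have "Lq_norm 1 S g = (if I = \<infinity> then \<infinity> else ennreal (enn2real I))"
    unfolding Lq_norm_def I_def Let_def by simp
  also have "\<dots> = I" by (auto simp: less_top)
  finally show ?thesis unfolding I_def .
qed



theorem lemma5p2:
  fixes \<beta> q :: real
  assumes "1 < q"
  shows "\<exists>c>0. \<forall>\<delta> (f :: real \<Rightarrow> real).
           0 < \<delta> \<and> \<delta> < 1 / 100
           \<and> convex_on {-1<..<1} f
           \<and> f \<in> W_space q \<beta>
           \<and> (\<exists>a b. \<forall>x \<in> {-1 .. -1 + 100 * \<delta>\<^sup>2}. f x = a * x + b)
           \<and> (\<exists>a b. \<forall>x \<in> {1 - 100 * \<delta>\<^sup>2 .. 1}. f x = a * x + b)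
           \<longrightarrow> Omega2 f \<delta> (\<lambda>x. phi x powr (2 * \<beta>)) q
               \<le> ennreal (c * \<delta> powr (1 / q - 1))
                  * Omega2 f \<delta> (\<lambda>x. phi x powr (2 * \<beta> - 1 + 1 / q)) 1"
proof -
  note q = assms
  define a where "a = 2 * \<beta> - 1 + 1 / q"
  define K where "K = 2 powr \<bar>a\<bar>"
  define c where "c = (10 * K) powr (1 - 1/q)"
  have K0: "0 < K" by (simp add: K_def)
  have c0: "0 < c" using K0 by (simp add: c_def)
  show ?thesis
  proof (intro exI[of _ c] conjI allI impI c0)
    fix \<delta> and f :: "real \<Rightarrow> real"
    assume H: "0 < \<delta> \<and> \<delta> < 1 / 100
           \<and> convex_on {-1<..<1} f
           \<and> f \<in> W_space q \<beta>
           \<and> (\<exists>a b. \<forall>x \<in> {-1 .. -1 + 100 * \<delta>\<^sup>2}. f x = a * x + b)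
           \<and> (\<exists>a b. \<forall>x \<in> {1 - 100 * \<delta>\<^sup>2 .. 1}. f x = a * x + b)"
    then have d: "0 < \<delta>" "\<delta> < 1/100" and cf: "convex_on {-1<..<1} f" by auto
    from H obtain a1 b1 where L: "\<forall>x \<in> {-1 .. -1 + 100 * \<delta>\<^sup>2}. f x = a1 * x + b1" by blast
    from H obtain a2 b2 where Rt: "\<forall>x \<in> {1 - 100 * \<delta>\<^sup>2 .. 1}. f x = a2 * x + b2" by blast
    have fc: "continuous_on {-1..1} f" by (rule fcont[OF cf d L Rt])
    define G where "G = (\<lambda>z. Delta2 (\<delta> * phi z) f z)"
    define I where "I = {-1 + 8*\<delta>^2 .. 1 - 8*\<delta>^2}"
    define R where "R = (\<integral>\<^sup>+z. ennreal \<bar>phi z powr a * G z\<bar> * indicator I z \<partial>lborel)"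
    have Gm[measurable]: "G \<in> borel_measurable borel" unfolding G_def by (rule G_meas[OF fc])
    have R1: "Lq_norm 1 {-1 + 8 * \<delta>\<^sup>2 .. 1 - 8 * \<delta>\<^sup>2} (\<lambda>x. phi x powr (2 * \<beta> - 1 + 1 / q) * Delta2 (\<delta> * phi x) f x) = R"
      unfolding Lq1 R_def G_def I_def a_def ..
    have "R \<le> Omega2 f \<delta> (\<lambda>x. phi x powr (2 * \<beta> - 1 + 1 / q)) 1"
      unfolding Omega2_def R1[symmetric] using d by (intro SUP_upper) auto
    then have RHS: "ennreal (c * \<delta> powr (1 / q - 1)) * R \<le> ennreal (c * \<delta> powr (1 / q - 1)) * Omega2 f \<delta> (\<lambda>x. phi x powr (2 * \<beta> - 1 + 1 / q)) 1"
      by (rule mult_left_mono) simp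
    have cd0: "0 < c * \<delta> powr (1 / q - 1)" using c0 d by simp
    have main: "Omega2 f \<delta> (\<lambda>x. phi x powr (2 * \<beta>)) q \<le> ennreal (c * \<delta> powr (1 / q - 1)) * R"
    proof (cases "R = \<infinity>")
      case True
      have nz: "ennreal (c * \<delta> powr (1 / q - 1)) \<noteq> 0" using cd0 c0 d by simp
      have "ennreal (c * \<delta> powr (1 / q - 1)) * R = top" unfolding True ennreal_mult_top using nz by simp
      then show ?thesis by simp
    next
      case False
      then obtain r where r: "R = ennreal r" "0 \<le> r" by (cases R) auto
      define M where "M = (10 * K * r / \<delta>) powr (q - 1)"
      have M0: "0 \<le> M" by (simp add: M_def)
      have Rg: "(\<integral>\<^sup>+z. ennreal \<bar>phi z powr a * Delta2 (\<delta> * phi z) f z\<bar> * indicator {-1 + 8*\<delta>^2 .. 1 - 8*\<delta>^2} z \<partial>lborel) = ennreal r"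
        using r(1) unfolding R_def G_def I_def .
      have hb: "Lq_norm q {-1 + 8 * h\<^sup>2 .. 1 - 8 * h\<^sup>2} (\<lambda>x. phi x powr (2 * \<beta>) * Delta2 (h * phi x) f x)
          \<le> ennreal (c * \<delta> powr (1 / q - 1)) * R" if h: "h \<in> {0<..\<delta>}" for h
      proof -
        have h0: "0 < h" "h \<le> \<delta>" using h by auto
        define J where "J = (\<integral>\<^sup>+x. ennreal (\<bar>phi x powr (2 * \<beta>) * Delta2 (h * phi x) f x\<bar> powr q)
             * indicator {-1 + 8 * h\<^sup>2 .. 1 - 8 * h\<^sup>2} x \<partial>lborel)"
        have pw: "ennreal (\<bar>phi x powr (2 * \<beta>) * Delta2 (h * phi x) f x\<bar> powr q) * indicator {-1 + 8 * h\<^sup>2 .. 1 - 8 * h\<^sup>2} x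
            \<le> ennreal M * (ennreal \<bar>phi x powr a * G x\<bar> * indicator I x)" for x
        proof (cases "x \<in> {-1 + 8 * h\<^sup>2 .. 1 - 8 * h\<^sup>2}")
          case False then show ?thesis by simp
        next
          case xh: True
          have h2: "0 \<le> 8 * h^2" by simp
          have xh2: "-1 + 8 * h\<^sup>2 \<le> x" "x \<le> 1 - 8 * h\<^sup>2" using xh by auto
          have xr: "-1 \<le> x" "x \<le> 1" using xh2 h2 by linarith+
          show ?thesis
          proof (cases "-1 + 50*\<delta>^2 \<le> x \<and> x \<le> 1 - 50*\<delta>^2")
            case False
            then have out: "x < -1 + 50*\<delta>^2 \<or> 1 - 50*\<delta>^2 < x" by auto
            have "Delta2 (h * phi x) f x = 0" by (rule endzero[OF d h0 L Rt xr out])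
            then show ?thesis by simp
          next
            case True
            then have xm: "-1 + 50*\<delta>^2 \<le> x" "x \<le> 1 - 50*\<delta>^2" by auto
            have px: "0 < phi x" using phi_x_pos[OF d(1) xm] .
            have g45: "-1 < x - 4*(\<delta>*phi x)" "x + 4*(\<delta>*phi x) < 1"
              using geo(4,5)[OF d xm, of x] px d by simp_all
            have hd: "h * phi x \<le> \<delta> * phi x" using h0 px by (intro mult_right_mono) auto
            have hp: "0 \<le> h * phi x" using h0 px by simp
            have dp: "0 < \<delta> * phi x" using d px by simp
            have in1: "-1 < x - \<delta> * phi x" "x + \<delta> * phi x < 1" using g45 dp by linarith+
            have Dh: "Delta2 (h * phi x) f x = f (x - h * phi x) - 2 * f x + f (x + h * phi x)"
              using in1 hd hp by (intro Delta2_in) linarith+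
            have Gx: "G x = f (x - \<delta> * phi x) - 2 * f x + f (x + \<delta> * phi x)"
              unfolding G_def using in1 dp by (intro Delta2_in) linarith+
            have D0: "0 \<le> Delta2 (h * phi x) f x" unfolding Dh
              using in1 hd hp by (intro D2_nonneg[OF cf]) linarith+
            have DG: "Delta2 (h * phi x) f x \<le> G x" unfolding Dh Gx
              by (rule D2_mono[OF cf in1 hp hd])
            have Gx0: "0 \<le> G x" using D0 DG by linarith
            have w0: "0 < phi x powr (2 * \<beta>)" using px by simp
            have wt0: "0 < phi x powr a" using px by simp
            have dd: "0 \<le> \<delta>^2" by simp
            have "-1 + 8*\<delta>^2 \<le> x" "x \<le> 1 - 8*\<delta>^2" using xm dd by linarith+
            then have xI: "x \<in> I" unfolding I_def by simp
            have k1: "\<bar>phi x powr (2 * \<beta>) * Delta2 (h * phi x) f x\<bar> powr q \<le> (phi x powr (2 * \<beta>) * G x) powr q"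
            proof -
              have "\<bar>phi x powr (2 * \<beta>) * Delta2 (h * phi x) f x\<bar> = phi x powr (2 * \<beta>) * Delta2 (h * phi x) f x"
                using w0 D0 by simp
              also have "\<dots> \<le> phi x powr (2 * \<beta>) * G x" using w0 DG by (intro mult_left_mono) auto
              finally show ?thesis using q by (intro powr_mono2) auto
            qed
            have k2: "(phi x powr (2 * \<beta>) * G x) powr q = (phi x powr a * G x) * (phi x powr a * G x * phi x) powr (q - 1)"
              unfolding a_def by (rule wid[OF px Gx0 q])
            have sb: "\<delta> * phi x * G x * phi x powr a \<le> 10 * K * r"
              using sup_bound[where a=a, OF cf fc d xm Rg r(2)] unfolding G_def K_def by simp
            have k3: "phi x powr a * G x * phi x \<le> 10 * K * r / \<delta>"
            proof -
              have "\<delta> * (phi x powr a * G x * phi x) \<le> 10 * K * r" using sb by (simp add: algebra_simps)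
              then show ?thesis using d by (simp add: field_simps)
            qed
            have k4: "(phi x powr a * G x * phi x) powr (q - 1) \<le> M"
              unfolding M_def using k3 q wt0 Gx0 px by (intro powr_mono2) auto
            have "\<bar>phi x powr (2 * \<beta>) * Delta2 (h * phi x) f x\<bar> powr q \<le> (phi x powr a * G x) * M"
            proof -
              have "(phi x powr a * G x) * (phi x powr a * G x * phi x) powr (q - 1) \<le> (phi x powr a * G x) * M"
                using k4 wt0 Gx0 by (intro mult_left_mono) auto
              then show ?thesis using k1 k2 by simp
            qed
            also have "\<dots> = M * \<bar>phi x powr a * G x\<bar>" using wt0 Gx0 by simp
            finally have k5: "\<bar>phi x powr (2 * \<beta>) * Delta2 (h * phi x) f x\<bar> powr q \<le> M * \<bar>phi x powr a * G x\<bar>" .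
            have "ennreal (\<bar>phi x powr (2 * \<beta>) * Delta2 (h * phi x) f x\<bar> powr q) \<le> ennreal (M * \<bar>phi x powr a * G x\<bar>)"
              using k5 by (rule ennreal_leI)
            also have "\<dots> = ennreal M * ennreal \<bar>phi x powr a * G x\<bar>" using M0 by (simp add: ennreal_mult)
            finally show ?thesis using xh xI by simp
          qed
        qed
        have "J \<le> (\<integral>\<^sup>+x. ennreal M * (ennreal \<bar>phi x powr a * G x\<bar> * indicator I x) \<partial>lborel)"
          unfolding J_def by (intro nn_integral_mono pw)
        also have "\<dots> = ennreal M * R" unfolding R_def I_def by (simp add: nn_integral_cmult)
        also have "\<dots> = ennreal (M * r)" using r M0 by (simp add: ennreal_mult)
        finally have JM: "J \<le> ennreal (M * r)" .
        then have Jt: "J \<noteq> \<infinity>" using top.extremum_uniqueI by fastforce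
        have "enn2real J \<le> M * r" using enn2real_mono[OF JM] M0 r by simp
        then have "enn2real J powr (1/q) \<le> (M * r) powr (1/q)" using q by (intro powr_mono2) auto
        also have "\<dots> \<le> c * \<delta> powr (1 / q - 1) * r"
          unfolding M_def c_def using final_alg[of "10 * K" \<delta> r q] K0 d r q by simp
        finally have jb: "enn2real J powr (1/q) \<le> c * \<delta> powr (1 / q - 1) * r" .
        have "Lq_norm q {-1 + 8 * h\<^sup>2 .. 1 - 8 * h\<^sup>2} (\<lambda>x. phi x powr (2 * \<beta>) * Delta2 (h * phi x) f x)
            = ennreal (enn2real J powr (1/q))"
          unfolding Lq_norm_def Let_def J_def[symmetric] using Jt by simp
        also have "\<dots> \<le> ennreal (c * \<delta> powr (1 / q - 1) * r)" using jb by (rule ennreal_leI)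
        also have "\<dots> = ennreal (c * \<delta> powr (1 / q - 1)) * R" using r cd0 by (simp add: ennreal_mult)
        finally show ?thesis .
      qed
      show ?thesis unfolding Omega2_def by (intro SUP_least hb)
    qed
    show "Omega2 f \<delta> (\<lambda>x. phi x powr (2 * \<beta>)) q \<le> ennreal (c * \<delta> powr (1 / q - 1)) * Omega2 f \<delta> (\<lambda>x. phi x powr (2 * \<beta> - 1 + 1 / q)) 1"
      using main RHS by (rule order_trans)
  qed
qed

end
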